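(* Let $G_7=K_1+P_6$ be the graph obtained from the path $P_6$ on six vertices by adding one new vertex adjacent to all six vertices of the path. Then $G_7$ is outerplanar and $\chi_{\mathrm{so}}(G_7)=7$.
   Context: All graphs are finite, simple and undirected. A strong odd coloring of a graph $G$ is a proper vertex coloring of $G$ such that for every non-isolated vertex $v$ and every color $c$, either no vertex of the open neighborhood $N_G(v)$ has color $c$, or color $c$ is used on an odd number of vertices of $N_G(v)$. The strong odd chromatic number $\chi_{\mathrm{so}}(G)$ is the minimum number of colors in a strong odd coloring of $G$. A graph is outerplanar if it has a plane embedding in which all vertices lie on the boundary of a single face. *)

theory Defs
  imports "HOL-Analysis.Analysis"
begin

definition simple_graph :: "'a set \<Rightarrow> ('a \<Rightarrow> 'a \<Rightarrow> bool) \<Rightarrow> bool" where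
  "simple_graph V E \<longleftrightarrow> finite V \<and> (\<forall>u v. E u v \<longrightarrow> u \<in> V \<and> v \<in> V \<and> u \<noteq> v \<and> E v u)"

definition nbhd :: "'a set \<Rightarrow> ('a \<Rightarrow> 'a \<Rightarrow> bool) \<Rightarrow> 'a \<Rightarrow> 'a set" where
  "nbhd V E v = {u \<in> V. E v u}"

definition strong_odd_coloring :: "'a set \<Rightarrow> ('a \<Rightarrow> 'a \<Rightarrow> bool) \<Rightarrow> ('a \<Rightarrow> nat) \<Rightarrow> bool" where
  "strong_odd_coloring V E c \<longleftrightarrow>
     (\<forall>u\<in>V. \<forall>v\<in>V. E u v \<longrightarrow> c u \<noteq> c v) \<and>
     (\<forall>v\<in>V. nbhd V E v \<noteq> {} \<longrightarrow>
        (\<forall>k. card {u \<in> nbhd V E v. c u = k} = 0 \<or> odd (card {u \<in> nbhd V E v. c u = k})))"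

definition chi_so :: "'a set \<Rightarrow> ('a \<Rightarrow> 'a \<Rightarrow> bool) \<Rightarrow> nat" where
  "chi_so V E = (LEAST k. \<exists>c. strong_odd_coloring V E c \<and> card (c ` V) = k)"

text \<open>Outerplanar: there is such an embedding and a face (connected component of the
complement of the drawing) whose boundary contains all vertices.\<close>

definition plane_embedding ::
  "'a set \<Rightarrow> ('a \<Rightarrow> 'a \<Rightarrow> bool) \<Rightarrow> ('a \<Rightarrow> complex) \<Rightarrow> ('a set \<Rightarrow> real \<Rightarrow> complex) \<Rightarrow> bool" where
  "plane_embedding V E p \<gamma> \<longleftrightarrow>
     inj_on p V \<and>
     (\<forall>u v. E u v \<longrightarrow> arc (\<gamma> {u,v}) \<and>
        {pathstart (\<gamma> {u,v}), pathfinish (\<gamma> {u,v})} = {p u, p v}) \<and>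
     (\<forall>u v w. E u v \<longrightarrow> w \<in> V \<longrightarrow> p w \<in> path_image (\<gamma> {u,v}) \<longrightarrow> w = u \<or> w = v) \<and>
     (\<forall>u v x y. E u v \<longrightarrow> E x y \<longrightarrow> {u,v} \<noteq> {x,y} \<longrightarrow>
        path_image (\<gamma> {u,v}) \<inter> path_image (\<gamma> {x,y}) \<subseteq> p ` ({u,v} \<inter> {x,y}))"

definition drawing ::
  "'a set \<Rightarrow> ('a \<Rightarrow> 'a \<Rightarrow> bool) \<Rightarrow> ('a \<Rightarrow> complex) \<Rightarrow> ('a set \<Rightarrow> real \<Rightarrow> complex) \<Rightarrow> complex set" where
  "drawing V E p \<gamma> = p ` V \<union> \<Union> {path_image (\<gamma> {u,v}) | u v. E u v}"

definition outerplanar :: "'a set \<Rightarrow> ('a \<Rightarrow> 'a \<Rightarrow> bool) \<Rightarrow> bool" where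
  "outerplanar V E \<longleftrightarrow> (\<exists>p \<gamma>. plane_embedding V E p \<gamma> \<and>
     (\<exists>F \<in> components (- drawing V E p \<gamma>). p ` V \<subseteq> frontier F))"

text \<open>G7 = K1 + P6: vertex 0 is the apex, vertices 1,...,6 form the path 1-2-3-4-5-6.\<close>

definition G7V :: "nat set" where
  "G7V = {0..6}"

definition G7E :: "nat \<Rightarrow> nat \<Rightarrow> bool" where
  "G7E u v \<longleftrightarrow> u \<in> G7V \<and> v \<in> G7V \<and> u \<noteq> v \<and> (u = 0 \<or> v = 0 \<or> u = v + 1 \<or> v = u + 1)"

end

theory Submission
  imports Defs
begin


definition pt :: "nat \<Rightarrow> complex" where "pt n = Complex (real n) ((real n)^2)"

lemma seg_char:
  assumes "z \<in> closed_segment (Complex a (a^2)) (Complex b (b^2))" "a \<le> b"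
  shows "a \<le> Re z \<and> Re z \<le> b \<and> Im z = (a+b) * Re z - a*b"
proof -
  obtain u where u: "0 \<le> u" "u \<le> 1" "z = (1-u) *\<^sub>R Complex a (a^2) + u *\<^sub>R Complex b (b^2)"
    using assms(1) unfolding closed_segment_def by blast
  have re: "Re z = (1-u)*a + u*b" and im: "Im z = (1-u)*a^2 + u*b^2" using u(3) by simp_all
  have "a*u \<le> b*u" using u assms(2) by (simp add: mult_right_mono)
  then have "(1-u)*a + u*b \<ge> a" by (simp add: algebra_simps)
  moreover have "(1-u)*a \<le> (1-u)*b" using u assms(2) by (simp add: mult_left_mono)
  then have "(1-u)*a + u*b \<le> b" by (simp add: algebra_simps)
  moreover have "Im z = (a+b) * Re z - a*b" unfolding re im by (simp add: algebra_simps power2_eq_square)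
  ultimately show ?thesis by (simp add: re)
qed

definition Elist :: "(nat \<times> nat) list" where
  "Elist = [(0,1),(0,2),(0,3),(0,4),(0,5),(0,6),(1,2),(2,3),(3,4),(4,5),(5,6)]"

lemma core:
  fixes x :: real
  assumes "(a,b) \<in> set Elist" "(c,d) \<in> set Elist" "(a,b) \<noteq> (c,d)"
    "real a \<le> x" "x \<le> real b" "real c \<le> x" "x \<le> real d"
    "(real a + real b) * x - real a * real b = (real c + real d) * x - real c * real d"
  shows "(x = real a \<and> (a = c \<or> a = d)) \<or> (x = real b \<and> (b = c \<or> b = d))"
  using assms unfolding Elist_def
  apply simp
  apply (elim disjE)
  apply (simp_all)
  done

lemma le6: "(n::nat) \<le> 6 \<Longrightarrow> n = 0 \<or> n = 1 \<or> n = 2 \<or> n = 3 \<or> n = 4 \<or> n = 5 \<or> n = 6"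
  by (simp add: le_Suc_eq numeral_eq_Suc)

lemma Elist_iff: "(a,b) \<in> set Elist \<longleftrightarrow> (a = 0 \<and> 1 \<le> b \<and> b \<le> 6) \<or> (1 \<le> a \<and> b = a+1 \<and> b \<le> 6)"
proof
  assume "(a,b) \<in> set Elist" then show "(a = 0 \<and> 1 \<le> b \<and> b \<le> 6) \<or> (1 \<le> a \<and> b = a+1 \<and> b \<le> 6)"
    unfolding Elist_def by auto
next
  assume h: "(a = 0 \<and> 1 \<le> b \<and> b \<le> 6) \<or> (1 \<le> a \<and> b = a+1 \<and> b \<le> 6)"
  then consider "a = 0" "1 \<le> b" "b \<le> 6" | "1 \<le> a" "b = a+1" "a \<le> 6" "a \<noteq> 6" by fastforce
  then show "(a,b) \<in> set Elist"
  proof cases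
    case 1
    from le6[OF 1(3)] 1(1,2) show ?thesis unfolding Elist_def by (elim disjE) simp_all
  next
    case 2
    from le6[OF 2(3)] 2(1,2,4) show ?thesis unfolding Elist_def by (elim disjE) simp_all
  qed
qed

lemma edge_list: "G7E u v \<Longrightarrow> (min u v, max u v) \<in> set Elist"
  unfolding Elist_iff G7E_def G7V_def by (auto simp: min_def max_def)

lemma G7E_sym: "G7E u v \<Longrightarrow> G7E v u" unfolding G7E_def by auto

definition gam :: "nat set \<Rightarrow> real \<Rightarrow> complex" where
  "gam S = linepath (pt (Min S)) (pt (Max S))"

lemma gam2: "gam {u,v} = linepath (pt (min u v)) (pt (max u v))"
  unfolding gam_def by (simp add: min_def max_def)

lemma pt_inj: "pt a = pt b \<longleftrightarrow> a = b"
  unfolding pt_def by (simp add: complex_eq_iff)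

lemma segpt:
  assumes "z \<in> path_image (gam {u,v})"
  shows "real (min u v) \<le> Re z \<and> Re z \<le> real (max u v) \<and>
     Im z = (real (min u v) + real (max u v)) * Re z - real (min u v) * real (max u v)"
proof -
  have "z \<in> closed_segment (Complex (real (min u v)) ((real (min u v))^2)) (Complex (real (max u v)) ((real (max u v))^2))"
    using assms unfolding gam2 pt_def by simp
  then show ?thesis by (intro seg_char) auto
qed

lemma pt_of: assumes "Re z = real a" "Im z = (real a + real b) * Re z - real a * real b"
  shows "z = pt a"
  using assms unfolding pt_def by (simp add: complex_eq_iff algebra_simps power2_eq_square)

lemma pt_of2: assumes "Re z = real b" "Im z = (real a + real b) * Re z - real a * real b"
  shows "z = pt b"
  using assms unfolding pt_def by (simp add: complex_eq_iff algebra_simps power2_eq_square)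

lemma emb: "plane_embedding G7V G7E pt gam"
  unfolding plane_embedding_def
proof (intro conjI allI impI)
  show "inj_on pt G7V" by (auto simp: inj_on_def pt_inj)
next
  fix u v assume e: "G7E u v"
  then have "u \<noteq> v" unfolding G7E_def by auto
  then have "pt (min u v) \<noteq> pt (max u v)" unfolding pt_inj by (cases "u \<le> v") (simp_all add: min_def max_def)
  then show "arc (gam {u,v})" unfolding gam2 by (rule arc_linepath)
  show "{pathstart (gam {u, v}), pathfinish (gam {u, v})} = {pt u, pt v}"
    unfolding gam2 pathstart_linepath pathfinish_linepath by (cases "u \<le> v") (simp_all add: min_def max_def insert_commute)
next
  fix u v w assume e: "G7E u v" and w: "w \<in> G7V" and pw: "pt w \<in> path_image (gam {u, v})"
  have "Im (pt w) = (real (min u v) + real (max u v)) * Re (pt w) - real (min u v) * real (max u v)"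
    using segpt[OF pw] by blast
  then have "(real w - real (min u v)) * (real w - real (max u v)) = 0"
    unfolding pt_def by (simp add: algebra_simps power2_eq_square)
  then have "real w = real (min u v) \<or> real w = real (max u v)" by (simp only: mult_eq_0_iff right_minus_eq)
  then have "w = min u v \<or> w = max u v" by (simp only: of_nat_eq_iff)
  then show "w = u \<or> w = v" by (cases "u \<le> v") (auto simp: min_def max_def)
next
  fix u v x y assume e1: "G7E u v" and e2: "G7E x y" and ne: "{u, v} \<noteq> {x, y}"
  show "path_image (gam {u, v}) \<inter> path_image (gam {x, y}) \<subseteq> pt ` ({u, v} \<inter> {x, y})"
  proof
    fix z assume "z \<in> path_image (gam {u, v}) \<inter> path_image (gam {x, y})"
    then have z1: "z \<in> path_image (gam {u, v})" and z2: "z \<in> path_image (gam {x, y})" by auto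
    define a where "a = min u v"
    define b where "b = max u v"
    define c where "c = min x y"
    define d where "d = max x y"
    have ab: "{a,b} = {u,v}" and cd: "{c,d} = {x,y}" unfolding a_def b_def c_def d_def
      by (auto simp: min_def max_def)
    have s1: "real a \<le> Re z \<and> Re z \<le> real b \<and> Im z = (real a + real b) * Re z - real a * real b"
      using segpt[OF z1] unfolding a_def b_def .
    have s2: "real c \<le> Re z \<and> Re z \<le> real d \<and> Im z = (real c + real d) * Re z - real c * real d"
      using segpt[OF z2] unfolding c_def d_def .
    have hne: "(a,b) \<noteq> (c,d)"
    proof
      assume "(a,b) = (c,d)" then have "{a,b} = {c,d}" by simp
      then show False using ab cd ne by simp
    qed
    have h1: "(a,b) \<in> set Elist" using edge_list[OF e1] unfolding a_def b_def .
    have h2: "(c,d) \<in> set Elist" using edge_list[OF e2] unfolding c_def d_def .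
    have "(Re z = real a \<and> (a = c \<or> a = d)) \<or> (Re z = real b \<and> (b = c \<or> b = d))"
      by (rule core[OF h1 h2 hne]) (use s1 s2 in auto)
    then show "z \<in> pt ` ({u, v} \<inter> {x, y})"
    proof
      assume h: "Re z = real a \<and> (a = c \<or> a = d)"
      have "z = pt a" by (rule pt_of) (use h s1 in auto)
      moreover have "a \<in> {u,v} \<inter> {x,y}" using h unfolding ab[symmetric] cd[symmetric] by auto
      ultimately show ?thesis by blast
    next
      assume h: "Re z = real b \<and> (b = c \<or> b = d)"
      have "z = pt b" by (rule pt_of2) (use h s1 in auto)
      moreover have "b \<in> {u,v} \<inter> {x,y}" using h unfolding ab[symmetric] cd[symmetric] by auto
      ultimately show ?thesis by blast
    qed
  qed
qed

definition H :: "real \<Rightarrow> complex set" where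
  "H c = {z. inner (Complex (-2*c) 1) z < -(c^2)}"

lemma H_iff: "z \<in> H c \<longleftrightarrow> Im z - 2*c*Re z < -(c^2)"
  unfolding H_def inner_complex_def by simp

lemma D_above:
  assumes "z \<in> drawing G7V G7E pt gam"
  shows "Im z - 2*c*Re z \<ge> -(c^2)"
proof -
  consider (v) n where "z = pt n" | (e) u v where "G7E u v" "z \<in> path_image (gam {u,v})"
    using assms unfolding drawing_def by blast
  then show ?thesis
  proof cases
    case v
    have "Im z - 2*c*Re z + c^2 = (real n - c)^2" unfolding v pt_def by (simp add: algebra_simps power2_eq_square)
    moreover have "(real n - c)^2 \<ge> 0" by simp
    ultimately show ?thesis by linarith
  next
    case e
    define a where "a = real (min u v)"
    define b where "b = real (max u v)"
    have s: "a \<le> Re z" "Re z \<le> b" "Im z = (a + b) * Re z - a * b"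
      using segpt[OF e(2)] unfolding a_def b_def by auto
    have "Im z - 2*c*Re z + c^2 = (Re z - c)^2 - (Re z - a) * (Re z - b)"
      unfolding s(3) by (simp add: algebra_simps power2_eq_square)
    moreover have "(Re z - a) * (Re z - b) \<le> 0" using s(1,2) by (intro mult_nonneg_nonpos) auto
    moreover have "(Re z - c)^2 \<ge> 0" by simp
    ultimately show ?thesis by linarith
  qed
qed

lemma H_disj: "H c \<inter> drawing G7V G7E pt gam = {}"
proof (rule ccontr)
  assume "H c \<inter> drawing G7V G7E pt gam \<noteq> {}"
  then obtain z where "z \<in> H c" "z \<in> drawing G7V G7E pt gam" by blast
  then show False using D_above[of z c] H_iff[of z c] by linarith
qed

definition z0 :: complex where "z0 = Complex 0 (-100)"

lemma z0_H: assumes "n \<in> G7V" shows "z0 \<in> H (real n)"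
proof -
  have "n \<le> 6" using assms unfolding G7V_def by auto
  then have "real n \<le> 6" by simp
  then have "(real n)^2 \<le> 6^2" by (intro power_mono) auto
  then show ?thesis unfolding H_iff z0_def by simp
qed

lemma pt_closure: "pt n \<in> closure (H (real n))"
  unfolding closure_approachable
proof (intro allI impI)
  fix e :: real assume e: "e > 0"
  let ?y = "pt n - of_real (e/2) * \<i>"
  have "?y \<in> H (real n)" unfolding H_iff pt_def using e by (simp add: power2_eq_square)
  moreover have "dist ?y (pt n) < e" using e by (simp add: dist_norm norm_mult)
  ultimately show "\<exists>y\<in>H (real n). dist y (pt n) < e" by blast
qed

lemma outer: "outerplanar G7V G7E"
proof -
  define D where "D = drawing G7V G7E pt gam"
  define Out where "Out = \<Union> ((\<lambda>n. H (real n)) ` G7V)"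
  have OD: "Out \<subseteq> - D" unfolding Out_def D_def using H_disj by blast
  have z0O: "z0 \<in> Out" unfolding Out_def using z0_H by (auto simp: G7V_def)
  have "connected Out" unfolding Out_def
  proof (rule connected_Union)
    show "connected S" if "S \<in> (\<lambda>n. H (real n)) ` G7V" for S
      using that unfolding H_def by (auto intro!: convex_connected convex_halfspace_lt)
    show "\<Inter> ((\<lambda>n. H (real n)) ` G7V) \<noteq> {}" using z0_H by blast
  qed
  define F where "F = connected_component_set (- D) z0"
  have z0D: "z0 \<in> - D" using OD z0O by blast
  have Fc: "F \<in> components (- D)" unfolding F_def by (rule componentsI[OF z0D])
  have OF: "Out \<subseteq> F" unfolding F_def by (rule connected_component_maximal[OF z0O \<open>connected Out\<close> OD])
  have FD: "F \<subseteq> - D" unfolding F_def by (rule connected_component_subset)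
  have "pt ` G7V \<subseteq> frontier F"
  proof
    fix w assume "w \<in> pt ` G7V"
    then obtain n where n: "n \<in> G7V" "w = pt n" by blast
    have "H (real n) \<subseteq> F" using OF n(1) unfolding Out_def by blast
    then have "w \<in> closure F" using pt_closure[of n] closure_mono n(2) by blast
    moreover have "w \<in> D" unfolding D_def drawing_def using n by blast
    then have "w \<notin> interior F" using interior_subset FD by blast
    ultimately show "w \<in> frontier F" unfolding frontier_def by blast
  qed
  then show ?thesis unfolding outerplanar_def using emb Fc unfolding D_def by blast
qed




lemma V_eq: "G7V = {0,1,2,3,4,5,6}"
  unfolding G7V_def by (auto dest: le6)

lemma filter_ins: "{u \<in> insert a A. P u} = (if P a then insert a {u \<in> A. P u} else {u \<in> A. P u})"
  by auto

lemma nb0: "nbhd G7V G7E 0 = {1,2,3,4,5,6}" unfolding nbhd_def G7E_def V_eq by auto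
lemma nb2: "nbhd G7V G7E 2 = {0,1,3}" unfolding nbhd_def G7E_def V_eq by auto
lemma nb3: "nbhd G7V G7E 3 = {0,2,4}" unfolding nbhd_def G7E_def V_eq by auto
lemma nb4: "nbhd G7V G7E 4 = {0,3,5}" unfolding nbhd_def G7E_def V_eq by auto
lemma nb5: "nbhd G7V G7E 5 = {0,4,6}" unfolding nbhd_def G7E_def V_eq by auto

lemma soc_inj:
  assumes "strong_odd_coloring G7V G7E c"
  shows "inj_on c G7V"
proof -
  have p: "c u \<noteq> c v" if "G7E u v" for u v
    using assms that unfolding strong_odd_coloring_def G7E_def by blast
  have o: "card {u \<in> nbhd G7V G7E v. c u = k} = 0 \<or> odd (card {u \<in> nbhd G7V G7E v. c u = k})"
    if "v \<in> G7V" "nbhd G7V G7E v \<noteq> {}" for v k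
    using assms that unfolding strong_odd_coloring_def by blast
  have e: "G7E 0 1" "G7E 0 2" "G7E 0 3" "G7E 0 4" "G7E 0 5" "G7E 0 6"
    "G7E 1 2" "G7E 2 3" "G7E 3 4" "G7E 4 5" "G7E 5 6"
    unfolding G7E_def V_eq by auto
  note n1 = p[OF e(1)] p[OF e(2)] p[OF e(3)] p[OF e(4)] p[OF e(5)] p[OF e(6)]
    p[OF e(7)] p[OF e(8)] p[OF e(9)] p[OF e(10)] p[OF e(11)]
  note n1s = n1 n1[THEN not_sym]
  have v: "0 \<in> G7V" "2 \<in> G7V" "3 \<in> G7V" "4 \<in> G7V" "5 \<in> G7V" unfolding V_eq by auto
  have "c 1 \<noteq> c 3"
  proof
    assume h: "c 1 = c 3"
    have S: "{u \<in> nbhd G7V G7E 2. c u = c 1} = {1,3}" unfolding nb2 using h n1s by auto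
    show False using o[OF v(2), of "c 1"] unfolding S by (simp add: nb0 nb2 nb3 nb4 nb5)
  qed
  moreover have "c 2 \<noteq> c 4"
  proof
    assume h: "c 2 = c 4"
    have S: "{u \<in> nbhd G7V G7E 3. c u = c 2} = {2,4}" unfolding nb3 using h n1s by auto
    show False using o[OF v(3), of "c 2"] unfolding S by (simp add: nb0 nb2 nb3 nb4 nb5)
  qed
  moreover have "c 3 \<noteq> c 5"
  proof
    assume h: "c 3 = c 5"
    have S: "{u \<in> nbhd G7V G7E 4. c u = c 3} = {3,5}" unfolding nb4 using h n1s by auto
    show False using o[OF v(4), of "c 3"] unfolding S by (simp add: nb0 nb2 nb3 nb4 nb5)
  qed
  moreover have "c 4 \<noteq> c 6"
  proof
    assume h: "c 4 = c 6"
    have S: "{u \<in> nbhd G7V G7E 5. c u = c 4} = {4,6}" unfolding nb5 using h n1s by auto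
    show False using o[OF v(5), of "c 4"] unfolding S by (simp add: nb0 nb2 nb3 nb4 nb5)
  qed
  ultimately have n2: "c 1 \<noteq> c 3" "c 2 \<noteq> c 4" "c 3 \<noteq> c 5" "c 4 \<noteq> c 6" by auto
  note n2s = n1s n2 n2[THEN not_sym]
  have "c 1 \<noteq> c 4"
  proof
    assume h: "c 1 = c 4"
    have S: "{u \<in> nbhd G7V G7E 0. c u = c 1} = {1,4}" unfolding nb0 using h n2s by auto
    show False using o[OF v(1), of "c 1"] unfolding S by (simp add: nb0 nb2 nb3 nb4 nb5)
  qed
  moreover have "c 1 \<noteq> c 5"
  proof
    assume h: "c 1 = c 5"
    have S: "{u \<in> nbhd G7V G7E 0. c u = c 1} = {1,5}" unfolding nb0 using h n2s by auto
    show False using o[OF v(1), of "c 1"] unfolding S by (simp add: nb0 nb2 nb3 nb4 nb5)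
  qed
  moreover have "c 1 \<noteq> c 6"
  proof
    assume h: "c 1 = c 6"
    have S: "{u \<in> nbhd G7V G7E 0. c u = c 1} = {1,6}" unfolding nb0 using h n2s by auto
    show False using o[OF v(1), of "c 1"] unfolding S by (simp add: nb0 nb2 nb3 nb4 nb5)
  qed
  moreover have "c 2 \<noteq> c 5"
  proof
    assume h: "c 2 = c 5"
    have S: "{u \<in> nbhd G7V G7E 0. c u = c 2} = {2,5}" unfolding nb0 using h n2s by auto
    show False using o[OF v(1), of "c 2"] unfolding S by (simp add: nb0 nb2 nb3 nb4 nb5)
  qed
  moreover have "c 2 \<noteq> c 6"
  proof
    assume h: "c 2 = c 6"
    have S: "{u \<in> nbhd G7V G7E 0. c u = c 2} = {2,6}" unfolding nb0 using h n2s by auto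
    show False using o[OF v(1), of "c 2"] unfolding S by (simp add: nb0 nb2 nb3 nb4 nb5)
  qed
  moreover have "c 3 \<noteq> c 6"
  proof
    assume h: "c 3 = c 6"
    have S: "{u \<in> nbhd G7V G7E 0. c u = c 3} = {3,6}" unfolding nb0 using h n2s by auto
    show False using o[OF v(1), of "c 3"] unfolding S by (simp add: nb0 nb2 nb3 nb4 nb5)
  qed
  ultimately have n3: "c 1 \<noteq> c 4" "c 1 \<noteq> c 5" "c 1 \<noteq> c 6" "c 2 \<noteq> c 5" "c 2 \<noteq> c 6" "c 3 \<noteq> c 6"
    by auto
  note all = n2s n3 n3[THEN not_sym]
  show ?thesis unfolding inj_on_def V_eq
    using all by auto
qed

lemma id_soc: "strong_odd_coloring G7V G7E (\<lambda>x. x)"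
  unfolding strong_odd_coloring_def
proof (intro conjI ballI impI allI)
  fix u v assume "G7E u v" then show "u \<noteq> v" unfolding G7E_def by auto
next
  fix v k
  have "{u \<in> nbhd G7V G7E v. u = k} = {} \<or> {u \<in> nbhd G7V G7E v. u = k} = {k}" by auto
  then show "card {u \<in> nbhd G7V G7E v. u = k} = 0 \<or> odd (card {u \<in> nbhd G7V G7E v. u = k})"
    by auto
qed

lemma chi7: "chi_so G7V G7E = 7"
  unfolding chi_so_def
proof (rule Least_equality)
  have "card ((\<lambda>x. x) ` G7V) = 7" unfolding V_eq by simp
  then show "\<exists>c. strong_odd_coloring G7V G7E c \<and> card (c ` G7V) = 7" using id_soc by blast
next
  fix y assume "\<exists>c. strong_odd_coloring G7V G7E c \<and> card (c ` G7V) = y"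
  then obtain c where "strong_odd_coloring G7V G7E c" "card (c ` G7V) = y" by blast
  then have "y = card G7V" using card_image[OF soc_inj] by metis
  then show "7 \<le> y" unfolding V_eq by simp
qed

lemma sg: "simple_graph G7V G7E"
  unfolding simple_graph_def G7E_def G7V_def by auto


theorem proposition3p2:
  shows "simple_graph G7V G7E \<and> outerplanar G7V G7E \<and> chi_so G7V G7E = 7"
  using sg outer chi7 by blast

end
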